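(* Assume $\Lambda\subset(0,\infty)$ and a family of disjoint intervals $I_k=(a_k,b_k)\subset(0,\infty)$, $0<a_1<b_1<\cdots$, $a_k\nearrow+\infty$, is substantial for some increasing function $\Psi(s)\nearrow\infty$. Then $\Lambda$ is a uniqueness set for $B_\sigma$ whenever $\sigma$ satisfies: (a) $\sigma(x)\le \frac{1}{2e}\Psi\bigl(\frac{x}{2e}\bigr)$ for all $x$; and (b) there exists a sequence of integers $n_j\to\infty$ such that $\frac{1}{\sigma(2b_{n_j})}\sum_{k=1}^{n_j}\Psi(b_k-a_k)\left(\frac{b_k-a_k}{b_k}\right)^2\to\infty$ as $j\to\infty$.
   Context: For a monotone function $\sigma$ on $(0,\infty)$ with $\sigma(y)\nearrow\infty$, the generalized Bernstein class is $B_\sigma=\{F$ entire$: |F(x+iy)|\le C_F e^{|y|\sigma(|y|)}, x+iy\in\mathbb{C}\}$, with $C_F>0$ a constant depending on $F$. A family of disjoint intervals $(a_k,b_k)$ is substantial for an increasing function $\Psi$ if $n_\Lambda(a_k,b_k)/(b_k-a_k)>\Psi(b_k-a_k)$ for all $k$ (where $n_\Lambda(I)$ is the number of points of $\Lambda$ in $I$) and $\sum_k((b_k-a_k)/b_k)^2=+\infty$. $\Lambda$ being a uniqueness set for $B_\sigma$ means that $F\in B_\sigma$ and $F|_\Lambda=0$ imply $F\equiv0$. *)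

theory Defs
  imports "HOL-Analysis.Analysis"
begin

definition bernstein_class :: "(real \<Rightarrow> real) \<Rightarrow> (complex \<Rightarrow> complex) set" where
  "bernstein_class \<sigma> = {F. F holomorphic_on UNIV \<and>
     (\<exists>C>0. \<forall>z. cmod (F z) \<le> C * exp (\<bar>Im z\<bar> * \<sigma> \<bar>Im z\<bar>))}"

definition uniqueness_set :: "real set \<Rightarrow> (real \<Rightarrow> real) \<Rightarrow> bool" where
  "uniqueness_set \<Lambda> \<sigma> \<longleftrightarrow>
     (\<forall>F \<in> bernstein_class \<sigma>. (\<forall>t\<in>\<Lambda>. F (complex_of_real t) = 0) \<longrightarrow> (\<forall>z. F z = 0))"

text \<open>An interval containing infinitely many points of Lambda has n_Lambda = infinity,
  so the density inequality holds trivially.\<close>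
definition substantial :: "real set \<Rightarrow> (nat \<Rightarrow> real) \<Rightarrow> (nat \<Rightarrow> real) \<Rightarrow> (real \<Rightarrow> real) \<Rightarrow> bool" where
  "substantial \<Lambda> a b \<Psi> \<longleftrightarrow>
     (\<forall>k\<ge>1. infinite (\<Lambda> \<inter> {a k<..<b k}) \<or>
             real (card (\<Lambda> \<inter> {a k<..<b k})) / (b k - a k) > \<Psi> (b k - a k)) \<and>
     filterlim (\<lambda>n. \<Sum>k=1..n. ((b k - a k) / b k)^2) at_top sequentially"

end

theory Submission
  imports Defs "HOL-Complex_Analysis.Complex_Analysis"
begin

lemma arctan_le_self: fixes t::real assumes "0 \<le> t" shows "arctan t \<le> t"
proof -
  have d: "\<And>x. ((\<lambda>u. u - arctan u) has_real_derivative (1 - inverse (1 + x\<^sup>2))) (at x)"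
    by (auto intro!: derivative_eq_intros DERIV_arctan)
  have "(\<lambda>u. u - arctan u) 0 \<le> (\<lambda>u. u - arctan u) t"
  proof (rule DERIV_nonneg_imp_nondecreasing[OF assms])
    fix x assume "0 \<le> x" "x \<le> t"
    show "\<exists>y. ((\<lambda>u. u - arctan u) has_real_derivative y) (at x) \<and> 0 \<le> y"
      apply (rule exI[of _ "1 - inverse (1 + x\<^sup>2)"])
      using d[of x] by (simp add: inverse_le_1_iff)
  qed
  then show ?thesis by simp
qed

lemma Arg_le_ratio:
  assumes "0 < Re v" "0 \<le> Im v" shows "Arg v \<le> Im v / Re v"
proof -
  define th where "th = Arg v"
  have v: "v = rcis (cmod v) th" by (simp add: th_def rcis_cmod_Arg)
  have Re: "Re v = cmod v * cos th" and Im: "Im v = cmod v * sin th"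
    by (subst v, simp)+
  have "\<bar>th\<bar> < pi/2" using assms Arg_Re_pos th_def by blast
  have nz: "cmod v > 0" using assms by auto
  have "cos th > 0" using Re assms nz by (metis zero_less_mult_pos)
  have "tan th = Im v / Re v" using Re Im nz by (simp add: tan_def)
  moreover have "- (pi/2) < th" "th < pi/2" using \<open>\<bar>th\<bar> < pi/2\<close> by auto
  then have "arctan (tan th) = th" by (rule arctan_tan)
  ultimately have "arctan (Im v / Re v) = th" by simp
  moreover have "0 \<le> Im v / Re v" using assms by simp
  ultimately show ?thesis using arctan_le_self th_def by metis
qed

lemma Arg_ge_sin:
  assumes "0 \<le> Im v" "v \<noteq> 0" shows "Im v / cmod v \<le> Arg v"
proof -
  define th where "th = Arg v"
  have v: "v = rcis (cmod v) th" by (simp add: th_def rcis_cmod_Arg)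
  have Im: "Im v = cmod v * sin th" by (subst v, simp)
  have "0 \<le> th" using assms Arg_less_0 th_def by blast
  have nz: "cmod v > 0" using assms by auto
  have "Im v / cmod v = sin th" using Im nz by simp
  also have "\<dots> \<le> th" using sin_x_le_x \<open>0 \<le> th\<close> by blast
  finally show ?thesis by (simp add: th_def)
qed

definition om :: "real \<Rightarrow> real \<Rightarrow> complex \<Rightarrow> real" where
  "om p q z = Im (Ln ((z - of_real q) / (z - of_real p)))"

lemma ratio_eq:
  fixes p q :: real assumes "z \<noteq> of_real p"
  shows "(z - of_real q) / (z - of_real p) = ((z - of_real q) * cnj (z - of_real p)) / of_real ((cmod (z - of_real p))\<^sup>2)"
proof -
  have "(z - of_real p) * cnj (z - of_real p) = of_real ((cmod (z - of_real p))\<^sup>2)"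
    by (rule complex_norm_square[symmetric])
  moreover have "cnj (z - of_real p) \<noteq> 0" using assms by (metis complex_cnj_zero_iff right_minus_eq)
  ultimately show ?thesis using assms by (metis (no_types, lifting) mult_divide_mult_cancel_right)
qed

lemma V_Re: "Re ((z - of_real q) * cnj (z - of_real p)) = (Re z - q) * (Re z - p) + (Im z)\<^sup>2"
  by (simp add: power2_eq_square)
lemma V_Im: "Im ((z - of_real q) * cnj (z - of_real p)) = (q - p) * Im z"
  by (simp add: algebra_simps)

lemma om_Arg:
  fixes p q :: real assumes "0 < Im z" "p < q"
  shows "om p q z = Arg ((z - of_real q) * cnj (z - of_real p))"
proof -
  have zp: "z \<noteq> of_real p" using assms by auto
  have pos: "0 < (cmod (z - of_real p))\<^sup>2" using zp by simp
  have nz: "(z - of_real q) / (z - of_real p) \<noteq> 0" using assms by auto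
  have "om p q z = Arg ((z - of_real q) / (z - of_real p))"
    unfolding om_def using Arg_eq_Im_Ln[OF nz] by simp
  also have "\<dots> = Arg (((z - of_real q) * cnj (z - of_real p)) / of_real ((cmod (z - of_real p))\<^sup>2))"
    by (simp only: ratio_eq[OF zp])
  also have "\<dots> = Arg ((z - of_real q) * cnj (z - of_real p))"
    using pos by (rule Arg_divide_of_real)
  finally show ?thesis .
qed

lemma om_nonneg:
  fixes p q :: real assumes "0 < Im z" "p < q"
  shows "0 \<le> om p q z \<and> om p q z \<le> pi"
proof -
  have "0 < Im ((z - of_real q) * cnj (z - of_real p))" unfolding V_Im using assms by simp
  then show ?thesis using om_Arg[OF assms] Arg_lt_pi by (metis less_eq_real_def)
qed

lemma om_upper:
  fixes p q :: real assumes "0 < Im z" "p < q" "0 < (Re z - q) * (Re z - p) + (Im z)\<^sup>2"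
  shows "om p q z \<le> (q - p) * Im z / ((Re z - q) * (Re z - p) + (Im z)\<^sup>2)"
  using Arg_le_ratio[of "(z - of_real q) * cnj (z - of_real p)"] om_Arg[OF assms(1,2)] assms
  unfolding V_Re V_Im by simp

lemma om_lower:
  fixes p q :: real assumes "0 < Im z" "p < q"
  shows "(q - p) * Im z / cmod ((z - of_real q) * cnj (z - of_real p)) \<le> om p q z"
proof -
  have "0 < Im ((z - of_real q) * cnj (z - of_real p))" unfolding V_Im using assms by simp
  then have "(z - of_real q) * cnj (z - of_real p) \<noteq> 0" by (metis less_irrefl zero_complex.simps(2))
  then show ?thesis using Arg_ge_sin[of "(z - of_real q) * cnj (z - of_real p)"] om_Arg[OF assms]
    unfolding V_Im using assms by simp
qed

lemma om_reflect:
  fixes p q R :: real assumes "0 < Im z" "0 < p" "p < q" "cmod z = R"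
  shows "om (R\<^sup>2 / q) (R\<^sup>2 / p) z = om p q z"
proof -
  have R: "R > 0" using assms by auto
  have zz: "z * cnj z = of_real (R\<^sup>2)" by (metis complex_norm_square assms(4))
  have pq: "R\<^sup>2 / q < R\<^sup>2 / p" using assms R by (simp add: divide_strict_left_mono)
  have r1: "of_real (R\<^sup>2 / p) = z * cnj z / of_real p" by (simp add: zz)
  have r2: "of_real (R\<^sup>2 / q) = z * cnj z / of_real q" by (simp add: zz)
  have e1: "z - of_real (R\<^sup>2 / p) = - (z / of_real p) * cnj (z - of_real p)"
    unfolding r1 using assms by (simp add: field_simps)
  have e2: "cnj (z - of_real (R\<^sup>2 / q)) = - (cnj z / of_real q) * (z - of_real q)"
    unfolding complex_cnj_diff complex_cnj_complex_of_real r2 using assms by (simp add: field_simps)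
  have "(z - of_real (R\<^sup>2 / p)) * cnj (z - of_real (R\<^sup>2 / q)) =
      (z * cnj z / of_real (p*q)) * ((z - of_real q) * cnj (z - of_real p))"
    unfolding e1 e2 by (simp add: field_simps)
  also have "\<dots> = ((z - of_real q) * cnj (z - of_real p)) * of_real (R\<^sup>2 / (p*q))"
    unfolding zz by (simp add: field_simps)
  finally have eq: "(z - of_real (R\<^sup>2 / p)) * cnj (z - of_real (R\<^sup>2 / q)) =
      ((z - of_real q) * cnj (z - of_real p)) * of_real (R\<^sup>2 / (p*q))" .
  have pos: "0 < R\<^sup>2 / (p*q)" using assms R by simp
  have "Arg ((z - of_real (R\<^sup>2 / p)) * cnj (z - of_real (R\<^sup>2 / q))) =
      Arg ((z - of_real q) * cnj (z - of_real p))"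
    unfolding eq using pos by (rule Arg_times_of_real2)
  then show ?thesis unfolding om_Arg[OF assms(1) pq] om_Arg[OF assms(1) assms(3)] .
qed


lemma factor_zeros:
  fixes Z :: "complex set"
  assumes "finite Z"
  shows "\<And>F. F holomorphic_on UNIV \<Longrightarrow> (\<forall>l\<in>Z. F l = 0) \<Longrightarrow>
     \<exists>Q. Q holomorphic_on UNIV \<and> (\<forall>w. F w = Q w * (\<Prod>l\<in>Z. w - l))"
  using assms
proof (induction Z rule: finite_induct)
  case empty
  then show ?case by auto
next
  case (insert l Z)
  define F' where "F' = (\<lambda>w. if w = l then deriv F l else (F w - F l) / (w - l))"
  have F'h: "F' holomorphic_on UNIV" unfolding F'_def
    by (rule pole_lemma_open) (use insert in auto)
  have Fl: "F l = 0" using insert by auto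
  have "\<forall>m\<in>Z. F' m = 0" using insert Fl unfolding F'_def by auto
  then obtain Q where Q: "Q holomorphic_on UNIV" "\<forall>w. F' w = Q w * (\<Prod>m\<in>Z. w - m)"
    using insert.IH F'h by blast
  have "F w = Q w * (\<Prod>m\<in>insert l Z. w - m)" for w
  proof (cases "w = l")
    case True then show ?thesis using Fl insert.hyps by simp
  next
    case False
    then have "F w = (w - l) * F' w" using Fl unfolding F'_def by simp
    then show ?thesis using Q(2) insert by simp
  qed
  then show ?case using Q(1) by blast
qed

lemma local_jensen:
  fixes F :: "complex \<Rightarrow> complex" and Z :: "complex set"
  assumes F: "F holomorphic_on UNIV" and fin: "finite Z" and zero: "\<forall>l\<in>Z. F l = 0"
    and close: "\<forall>l\<in>Z. cmod (l - z) \<le> d" and d: "0 < d" "d < r"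
    and M: "\<And>w. cmod (w - z) = r \<Longrightarrow> cmod (F w) \<le> M"
  shows "cmod (F z) \<le> M * (d / (r - d)) ^ card Z"
proof -
  obtain Q where Q: "Q holomorphic_on UNIV" "\<forall>w. F w = Q w * (\<Prod>l\<in>Z. w - l)"
    using factor_zeros[OF fin F zero] by blast
  have Qw: "cmod (Q w) \<le> M / (r - d) ^ card Z" if "w \<in> frontier (ball z r)" for w
  proof -
    have wr: "cmod (w - z) = r" using that d by (simp add: dist_norm norm_minus_commute)
    have "(r - d) ^ card Z \<le> (\<Prod>l\<in>Z. cmod (w - l))"
    proof -
      have "(r - d) ^ card Z = (\<Prod>l\<in>Z. r - d)" by simp
      also have "\<dots> \<le> (\<Prod>l\<in>Z. cmod (w - l))"
      proof (rule prod_mono)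
        fix l assume "l \<in> Z"
        then have "cmod (l - z) \<le> d" using close by auto
        moreover have "cmod (w - z) \<le> cmod (w - l) + cmod (l - z)"
          using norm_triangle_ineq[of "w - l" "l - z"] by simp
        ultimately show "0 \<le> r - d \<and> r - d \<le> cmod (w - l)" using wr d by auto
      qed
      finally show ?thesis .
    qed
    moreover have "cmod (F w) = cmod (Q w) * (\<Prod>l\<in>Z. cmod (w - l))"
      using Q(2) by (simp add: norm_mult prod_norm)
    moreover have "cmod (F w) \<le> M" using M wr by auto
    moreover have "0 < (r - d) ^ card Z" using d by simp
    ultimately have "cmod (Q w) * (r - d) ^ card Z \<le> M"
      by (smt (verit, best) mult_left_mono norm_ge_zero)
    then show ?thesis using \<open>0 < (r - d) ^ card Z\<close> by (simp add: pos_le_divide_eq)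
  qed
  have Qz: "cmod (Q z) \<le> M / (r - d) ^ card Z"
  proof (rule maximum_modulus_frontier[of Q "ball z r"])
    show "Q holomorphic_on interior (ball z r)" using Q(1) by (rule holomorphic_on_subset) auto
    show "continuous_on (closure (ball z r)) Q"
      using Q(1) holomorphic_on_imp_continuous_on continuous_on_subset by blast
  qed (use Qw d in auto)
  have "(\<Prod>l\<in>Z. cmod (z - l)) \<le> (\<Prod>l\<in>Z. d)"
    by (rule prod_mono) (use close in \<open>auto simp: norm_minus_commute\<close>)
  then have P: "(\<Prod>l\<in>Z. cmod (z - l)) \<le> d ^ card Z" by simp
  have "cmod (F z) = cmod (Q z) * (\<Prod>l\<in>Z. cmod (z - l))"
    using Q(2) by (simp add: norm_mult prod_norm)
  also have "\<dots> \<le> (M / (r - d) ^ card Z) * d ^ card Z"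
  proof (rule mult_mono[OF Qz P])
    have "cmod (F (z + of_real r)) \<le> M" using M[of "z + of_real r"] d by simp
    then have "0 \<le> M" using norm_ge_zero order_trans by blast
    then show "0 \<le> M / (r - d) ^ card Z" using d by simp
  qed (auto simp: prod_nonneg)
  also have "\<dots> = M * (d / (r - d)) ^ card Z" by (simp add: power_divide)
  finally show ?thesis .
qed

lemma entire_zero_infinite:
  fixes F :: "complex \<Rightarrow> complex"
  assumes F: "F holomorphic_on UNIV" and inf: "infinite T" and T: "T \<subseteq> cball 0 \<rho>"
    and zero: "\<forall>t\<in>T. F t = 0"
  shows "F w = 0"
proof -
  obtain \<xi> where "\<xi> \<in> cball 0 \<rho>" and lim: "\<xi> islimpt T"
    using Heine_Borel_imp_Bolzano_Weierstrass[OF compact_cball inf T] by blast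
  show ?thesis
  proof (rule analytic_continuation[OF F open_UNIV connected_UNIV _ _ lim])
    show "\<And>z. z \<in> T \<Longrightarrow> F z = 0" using zero by blast
  qed auto
qed



lemma t_sigma:
  fixes \<sigma> :: "real \<Rightarrow> real"
  assumes "mono_on {0<..} \<sigma>" "0 \<le> t" "t \<le> s" "0 < s"
  shows "t * \<sigma> t \<le> s * max 0 (\<sigma> s)"
proof (cases "t = 0")
  case True then show ?thesis using assms by simp
next
  case False
  then have "\<sigma> t \<le> \<sigma> s" using assms by (intro mono_onD[OF assms(1)]) auto
  then have "t * \<sigma> t \<le> t * max 0 (\<sigma> s)" using assms by (intro mult_left_mono) auto
  also have "\<dots> \<le> s * max 0 (\<sigma> s)" using assms by (intro mult_right_mono) auto
  finally show ?thesis .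
qed

lemma exp1_ge2: "2 \<le> exp (1::real)"
  using exp_ge_add_one_self[of 1] by simp

lemma local_small:
  fixes F :: "complex \<Rightarrow> complex" and \<Lambda> :: "real set" and \<sigma> \<Psi> :: "real \<Rightarrow> real"
  assumes F: "F holomorphic_on UNIV"
    and growth: "\<forall>w. cmod (F w) \<le> C * exp (\<bar>Im w\<bar> * \<sigma> \<bar>Im w\<bar>)" and C: "0 < C"
    and \<sigma>_mono: "mono_on {0<..} \<sigma>" and \<Psi>_mono: "mono_on {0<..} \<Psi>"
    and cond_a: "\<And>x. x > 0 \<Longrightarrow> \<sigma> x \<le> 1 / (2 * exp 1) * \<Psi> (x / (2 * exp 1))"
    and ab: "a < b"
    and fin: "finite (\<Lambda> \<inter> {a<..<b})"
    and zero: "\<forall>t\<in>\<Lambda>. F (of_real t) = 0"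
    and card: "real (card (\<Lambda> \<inter> {a<..<b})) > (b - a) * \<Psi> (b - a)"
    and \<Psi>pos: "\<Psi> (b - a) > 0"
    and x: "\<bar>Re z - (a + b) / 2\<bar> \<le> (b - a) / 4" and y: "\<bar>Im z\<bar> \<le> (b - a) / 8"
  shows "cmod (F z) \<le> C * exp (- (5/16) * (b - a) * \<Psi> (b - a))"
proof -
  define l where "l = b - a"
  define e where "e = exp (1::real)"
  have l: "0 < l" using ab l_def by simp
  have e2: "2 \<le> e" using exp1_ge2 e_def by simp
  define d where "d = 7 * l / 8"
  define r where "r = (1 + e) * d"
  define s where "s = l / 8 + r"
  define P where "P = \<Psi> l"
  have P: "0 < P" using \<Psi>pos l_def P_def by simp
  define Z where "Z = complex_of_real ` (\<Lambda> \<inter> {a<..<b})"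
  have finZ: "finite Z" using fin Z_def by simp
  have cardZ: "card Z = card (\<Lambda> \<inter> {a<..<b})"
    unfolding Z_def by (rule card_image) (simp add: inj_on_def)
  have zeroZ: "\<forall>w\<in>Z. F w = 0" using zero Z_def by auto
  have closeZ: "\<forall>w\<in>Z. cmod (w - z) \<le> d"
  proof
    fix w assume "w \<in> Z"
    then obtain t where t: "t \<in> {a<..<b}" "w = of_real t" using Z_def by auto
    have "cmod (w - z) \<le> \<bar>Re (w - z)\<bar> + \<bar>Im (w - z)\<bar>" by (rule cmod_le)
    also have "\<dots> = \<bar>t - Re z\<bar> + \<bar>Im z\<bar>" using t by simp
    also have "\<dots> \<le> d"
    proof -
      have t1: "a < t" "t < b" using t by auto
      have x1: "Re z - (a+b)/2 \<le> (b-a)/4" "- (Re z - (a+b)/2) \<le> (b-a)/4"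
        using x abs_le_iff by blast+
      have "\<bar>t - Re z\<bar> \<le> 3 * (b - a) / 4"
      proof (rule abs_leI)
        show "t - Re z \<le> 3 * (b - a) / 4" using t1 x1 by argo
        show "- (t - Re z) \<le> 3 * (b - a) / 4" using t1 x1 by argo
      qed
      then show ?thesis using y unfolding d_def l_def by linarith
    qed
    finally show "cmod (w - z) \<le> d" .
  qed
  have d: "0 < d" "d < r" using l e2 unfolding d_def r_def by auto
  define M where "M = C * exp ((11/16) * l * P)"
  have Mb: "cmod (F w) \<le> M" if w: "cmod (w - z) = r" for w
  proof -
    have "\<bar>Im w\<bar> \<le> \<bar>Im z\<bar> + \<bar>Im (w - z)\<bar>" by simp
    also have "\<dots> \<le> l / 8 + r"
    proof (rule add_mono)
      show "\<bar>Im z\<bar> \<le> l / 8" using y l_def by simp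
      show "\<bar>Im (w - z)\<bar> \<le> r" using abs_Im_le_cmod[of "w - z"] w by simp
    qed
    finally have imw: "\<bar>Im w\<bar> \<le> s" unfolding s_def .
    have s0: "0 < s" using d l unfolding s_def by simp
    have "\<bar>Im w\<bar> * \<sigma> \<bar>Im w\<bar> \<le> s * max 0 (\<sigma> s)"
      by (rule t_sigma[OF \<sigma>_mono]) (use imw s0 in auto)
    also have "\<dots> \<le> s * (P / (2 * e))"
    proof -
      have "\<sigma> s \<le> 1 / (2 * e) * \<Psi> (s / (2 * e))" using cond_a[OF s0] e_def by simp
      also have "\<Psi> (s / (2 * e)) \<le> P"
      proof -
        have "s / (2 * e) \<le> l"
          using l e2 unfolding s_def r_def d_def by (simp add: field_simps)
        then show ?thesis unfolding P_def
          by (intro mono_onD[OF \<Psi>_mono]) (use s0 e2 l in auto)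
      qed
      then have "1 / (2 * e) * \<Psi> (s / (2 * e)) \<le> P / (2 * e)" using e2 by (simp add: divide_right_mono)
      finally have "\<sigma> s \<le> P / (2 * e)" by simp
      then have "max 0 (\<sigma> s) \<le> P / (2 * e)" using P e2 by simp
      then show ?thesis using s0 by (intro mult_left_mono) auto
    qed
    also have "\<dots> \<le> (11/16) * l * P"
    proof -
      have "s / (2 * e) \<le> (11/16) * l"
        using l e2 unfolding s_def r_def d_def by (simp add: field_simps)
      then have "s / (2 * e) * P \<le> (11/16) * l * P" using P by (intro mult_right_mono) auto
      then show ?thesis by (simp add: field_simps)
    qed
    finally have "\<bar>Im w\<bar> * \<sigma> \<bar>Im w\<bar> \<le> (11/16) * l * P" .
    then have "C * exp (\<bar>Im w\<bar> * \<sigma> \<bar>Im w\<bar>) \<le> M" unfolding M_def using C by simp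
    then show ?thesis using growth order_trans by blast
  qed
  have J: "cmod (F z) \<le> M * (d / (r - d)) ^ card Z"
    by (rule local_jensen[OF F finZ zeroZ closeZ d Mb])
  have "d / (r - d) = exp (-1)" using d unfolding r_def e_def
    by (simp add: field_simps exp_minus)
  then have "(d / (r - d)) ^ card Z = exp (- real (card Z))"
    by (simp add: exp_of_nat_mult[symmetric] exp_minus power_inverse) 
  also have "\<dots> \<le> exp (- (l * P))" using card cardZ unfolding l_def P_def by simp
  finally have "M * (d / (r - d)) ^ card Z \<le> M * exp (- (l * P))"
    using C unfolding M_def by (intro mult_left_mono) auto
  also have "\<dots> = C * exp (- (5/16) * l * P)"
  proof -
    have e: "(11/16)*(l*P) + -(l*P) = -(5/16)*(l*P)" by (simp add: field_simps)
    show ?thesis unfolding M_def mult.assoc exp_add[symmetric] e ..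
  qed
  finally show ?thesis using J unfolding l_def P_def by simp
qed



lemma ratio_Im_pos:
  fixes p q :: real assumes "0 < Im z" "p < q"
  shows "0 < Im ((z - of_real q) / (z - of_real p))"
proof -
  have zp: "z \<noteq> of_real p" using assms by auto
  have pos: "0 < (cmod (z - of_real p))\<^sup>2" using zp by simp
  have "Im ((z - of_real q) / (z - of_real p)) = (q - p) * Im z / (cmod (z - of_real p))\<^sup>2"
    unfolding ratio_eq[OF zp] by (simp add: Im_divide_of_real V_Im algebra_simps del: of_real_power)
  then show ?thesis using pos assms by simp
qed

lemma ratio_not_nonpos:
  fixes p q :: real assumes "0 < Im z" "p < q"
  shows "(z - of_real q) / (z - of_real p) \<notin> \<real>\<^sub>\<le>\<^sub>0"
  using ratio_Im_pos[OF assms] by (auto simp: complex_nonpos_Reals_iff)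

lemma gain:
  fixes p q R y :: real
  assumes p: "0 < p" "p < q" and y: "0 < y" "y \<le> p / 2" and R: "2 * q \<le> R"
  shows "(q - p) * y / (4 * q\<^sup>2) \<le> om p q (\<i> * of_real y) - om (R\<^sup>2 / q) (R\<^sup>2 / p) (\<i> * of_real y)"
proof -
  define z where "z = \<i> * of_real y"
  have z: "Re z = 0" "Im z = y" using z_def by auto
  have q0: "0 < q" using p by simp
  have R0: "0 < R" using R q0 by simp
  define V where "V = (z - of_real q) * cnj (z - of_real p)"
  have ReV: "Re V = p * q + y\<^sup>2" unfolding V_def V_Re z by simp
  have ImV: "Im V = (q - p) * y" unfolding V_def V_Im z by simp
  have "cmod V \<le> \<bar>Re V\<bar> + \<bar>Im V\<bar>" by (rule cmod_le)
  also have "\<dots> = p * q + y\<^sup>2 + (q - p) * y" unfolding ReV ImV using p y by simp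
  also have "\<dots> \<le> 2 * q\<^sup>2"
  proof -
    have "p * q \<le> q * q" using p by (intro mult_right_mono) auto
    moreover have "y * y \<le> q * q / 4"
    proof -
      have "y * y \<le> (q / 2) * (q / 2)" using p y by (intro mult_mono) auto
      then show ?thesis by simp
    qed
    moreover have "(q - p) * y \<le> q * q / 2"
    proof -
      have "(q - p) * y \<le> q * (q / 2)" using p y by (intro mult_mono) auto
      then show ?thesis by simp
    qed
    moreover have "0 \<le> q * q" by simp
    ultimately show ?thesis unfolding power2_eq_square by linarith
  qed
  finally have cV: "cmod V \<le> 2 * q\<^sup>2" .
  have "cmod V > 0" using ImV p y by (metis abs_Im_le_cmod abs_of_pos diff_gt_0_iff_gt less_le_trans zero_less_mult_iff)
  have l1: "(q - p) * y / (2 * q\<^sup>2) \<le> om p q z"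
  proof -
    have "(q - p) * y / (2 * q\<^sup>2) \<le> (q - p) * y / cmod V"
      using cV \<open>cmod V > 0\<close> p y by (intro divide_left_mono) auto
    also have "\<dots> \<le> om p q z" using om_lower[of z p q] z p y unfolding V_def by simp
    finally show ?thesis .
  qed
  define ps where "ps = R\<^sup>2 / q"
  define qs where "qs = R\<^sup>2 / p"
  have ps0: "0 < ps" using R0 q0 ps_def by simp
  have psqs: "ps < qs" unfolding ps_def qs_def using p R0 by (simp add: divide_strict_left_mono)
  have qp: "0 < qs * ps" using ps0 psqs by simp
  then have den: "0 < (Re z - qs) * (Re z - ps) + (Im z)\<^sup>2" unfolding z
    by (simp add: add_pos_nonneg)
  have "om ps qs z \<le> (qs - ps) * Im z / ((Re z - qs) * (Re z - ps) + (Im z)\<^sup>2)"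
    using om_upper[of z ps qs] z y psqs den by simp
  also have "\<dots> = (qs - ps) * y / (qs * ps + y\<^sup>2)" unfolding z by simp
  also have "\<dots> \<le> (qs - ps) * y / (qs * ps)"
    using psqs ps0 y qp by (intro divide_left_mono) (auto intro!: mult_pos_pos add_pos_nonneg)
  also have "\<dots> = (q - p) * y / R\<^sup>2"
    unfolding ps_def qs_def using p R0 by (simp add: field_simps power2_eq_square)
  also have "\<dots> \<le> (q - p) * y / (4 * q\<^sup>2)"
  proof -
    have "(2 * q)\<^sup>2 \<le> R\<^sup>2" using R q0 by (intro power_mono) auto
    then show ?thesis using p y q0 R0 by (intro divide_left_mono) (auto simp: power_mult_distrib)
  qed
  finally have l2: "om ps qs z \<le> (q - p) * y / (4 * q\<^sup>2)" .
  have "(q - p) * y / (4 * q\<^sup>2) = (q - p) * y / (2 * q\<^sup>2) - (q - p) * y / (4 * q\<^sup>2)"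
    by (simp add: field_simps)
  then show ?thesis using l1 l2 unfolding z_def ps_def qs_def by argo
qed



lemma tail:
  fixes a b \<eta> P :: real
  assumes ab: "a < b" and z: "Im z = \<eta>" "0 < \<eta>" and x: "(b - a) / 4 \<le> \<bar>Re z - (a + b) / 2\<bar>"
  shows "(b - a) * max 0 P / 16 * om ((a + b) / 2 - (b - a) / 8) ((a + b) / 2 + (b - a) / 8) z
         \<le> \<eta> * max 0 P"
proof -
  define l where "l = b - a"
  define p where "p = (a + b) / 2 - (b - a) / 8"
  define q where "q = (a + b) / 2 + (b - a) / 8"
  have l: "0 < l" using ab l_def by simp
  have pq: "p < q" using ab unfolding p_def q_def by argo
  have qp: "q - p = l / 4" unfolding p_def q_def l_def by simp
  have prod: "l * l / 64 \<le> (Re z - q) * (Re z - p)"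
  proof (cases "Re z \<ge> (a + b) / 2")
    case True
    then have "(b - a) / 4 \<le> Re z - (a + b) / 2" using x by simp
    then have h1: "l / 8 \<le> Re z - q" "l / 8 \<le> Re z - p" using ab unfolding l_def p_def q_def by argo+
    have "(l / 8) * (l / 8) \<le> (Re z - q) * (Re z - p)" using h1 l by (intro mult_mono) auto
    then show ?thesis by simp
  next
    case False
    then have "(b - a) / 4 \<le> (a + b) / 2 - Re z" using x by simp
    then have h1: "l / 8 \<le> q - Re z" "l / 8 \<le> p - Re z" using ab unfolding l_def p_def q_def by argo+
    have "(l / 8) * (l / 8) \<le> (q - Re z) * (p - Re z)" using h1 l by (intro mult_mono) auto
    then show ?thesis by (simp add: algebra_simps)
  qed
  have ll: "0 < l * l / 64" using l by simp
  have den: "l * l / 64 \<le> (Re z - q) * (Re z - p) + (Im z)\<^sup>2" using prod zero_le_power2[of "Im z"] by linarith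
  have den0: "0 < (Re z - q) * (Re z - p) + (Im z)\<^sup>2" using den ll by linarith
  have "om p q z \<le> (q - p) * Im z / ((Re z - q) * (Re z - p) + (Im z)\<^sup>2)"
    using om_upper[of z p q] z pq den0 by simp
  also have "\<dots> \<le> (q - p) * Im z / (l * l / 64)"
    using den ll pq z by (intro divide_left_mono) (auto intro!: mult_pos_pos)
  also have "\<dots> = 16 * \<eta> / l" unfolding qp z using l by (simp add: field_simps)
  finally have om: "om p q z \<le> 16 * \<eta> / l" .
  have "l * max 0 P / 16 * om p q z \<le> l * max 0 P / 16 * (16 * \<eta> / l)"
    using om l by (intro mult_left_mono) auto
  also have "\<dots> = \<eta> * max 0 P" using l by (simp add: field_simps)
  finally show ?thesis unfolding l_def p_def q_def .
qed



lemma exp11: "C * exp 1 * exp 1 = C * exp (2::real)"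
  by (simp add: mult.assoc exp_add[symmetric])

lemma aux1:
  fixes l P T :: real assumes "0 \<le> l * P" "T \<le> l * P / 16 * 4" shows "T \<le> 5/16 * l * P + 1"
proof -
  have "5/16 * l * P = 5/16 * (l * P)" by simp
  then show ?thesis using assms by linarith
qed

lemma seg_bound:
  fixes F :: "complex \<Rightarrow> complex" and \<Lambda> :: "real set" and \<sigma> \<Psi> :: "real \<Rightarrow> real"
    and a b :: "nat \<Rightarrow> real" and K :: "nat set"
  assumes F: "F holomorphic_on UNIV"
    and growth: "\<forall>w. cmod (F w) \<le> C * exp (\<bar>Im w\<bar> * \<sigma> \<bar>Im w\<bar>)" and C: "0 < C"
    and \<sigma>_mono: "mono_on {0<..} \<sigma>" and \<Psi>_mono: "mono_on {0<..} \<Psi>"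
    and cond_a: "\<And>x. x > 0 \<Longrightarrow> \<sigma> x \<le> 1 / (2 * exp 1) * \<Psi> (x / (2 * exp 1))"
    and K: "finite K"
    and ab: "\<And>k. k \<in> K \<Longrightarrow> a k < b k"
    and disj: "\<And>j k. j \<in> K \<Longrightarrow> k \<in> K \<Longrightarrow> j \<noteq> k \<Longrightarrow> b j \<le> a k \<or> b k \<le> a j"
    and fin: "\<And>k. k \<in> K \<Longrightarrow> finite (\<Lambda> \<inter> {a k<..<b k})"
    and card: "\<And>k. k \<in> K \<Longrightarrow> real (card (\<Lambda> \<inter> {a k<..<b k})) > (b k - a k) * \<Psi> (b k - a k)"
    and zero: "\<forall>t\<in>\<Lambda>. F (of_real t) = 0"
    and \<eta>: "0 < \<eta>" "\<eta> \<le> 1" "\<And>k. k \<in> K \<Longrightarrow> \<eta> \<le> (b k - a k) / 8"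
    and \<eta>S: "\<eta> * (\<Sum>k\<in>K. max 0 (\<Psi> (b k - a k))) \<le> 1" and \<eta>\<sigma>: "\<eta> * max 0 (\<sigma> 1) \<le> 1"
    and z: "Im z = \<eta>"
  shows "cmod (F z) * exp (\<Sum>k\<in>K. (b k - a k) * max 0 (\<Psi> (b k - a k)) / 16 *
           om ((a k + b k) / 2 - (b k - a k) / 8) ((a k + b k) / 2 + (b k - a k) / 8) z) \<le> C * exp 2"
proof -
  define T where "T k = (b k - a k) * max 0 (\<Psi> (b k - a k)) / 16 *
           om ((a k + b k) / 2 - (b k - a k) / 8) ((a k + b k) / 2 + (b k - a k) / 8) z" for k
  define Pp where "Pp k = max 0 (\<Psi> (b k - a k))" for k
  have Pp0: "0 \<le> Pp k" for k unfolding Pp_def by simp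
  have Fz: "cmod (F z) \<le> C * exp 1"
  proof -
    have "\<sigma> \<eta> \<le> \<sigma> 1" using \<eta> by (intro mono_onD[OF \<sigma>_mono]) auto
    then have "\<eta> * \<sigma> \<eta> \<le> \<eta> * max 0 (\<sigma> 1)" using \<eta> by (intro mult_left_mono) auto
    then have "\<eta> * \<sigma> \<eta> \<le> 1" using \<eta>\<sigma> by linarith
    then have "\<bar>Im z\<bar> * \<sigma> \<bar>Im z\<bar> \<le> 1" using z \<eta> by simp
    then have "C * exp (\<bar>Im z\<bar> * \<sigma> \<bar>Im z\<bar>) \<le> C * exp 1" using C by simp
    then show ?thesis using growth order_trans by blast
  qed
  have tailk: "T k \<le> \<eta> * Pp k" if "k \<in> K" "(b k - a k) / 4 \<le> \<bar>Re z - (a k + b k) / 2\<bar>" for k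
    unfolding T_def Pp_def by (rule tail) (use that ab z \<eta> in auto)
  show ?thesis
  proof (cases "\<exists>k\<in>K. \<bar>Re z - (a k + b k) / 2\<bar> < (b k - a k) / 4")
    case True
    then obtain k where k: "k \<in> K" "\<bar>Re z - (a k + b k) / 2\<bar> < (b k - a k) / 4" by blast
    have kx: "Re z - (a k + b k) / 2 < (b k - a k) / 4" "- (Re z - (a k + b k) / 2) < (b k - a k) / 4"
      using k(2) abs_less_iff by blast+
    have others: "(b j - a j) / 4 \<le> \<bar>Re z - (a j + b j) / 2\<bar>" if j: "j \<in> K - {k}" for j
    proof -
      have abj: "a j < b j" "a k < b k" using ab j k by auto
      from disj[of j k] j k consider "b j \<le> a k" | "b k \<le> a j" by auto
      then show ?thesis
      proof cases
        case 1
        then have "(b j - a j) / 4 \<le> Re z - (a j + b j) / 2" using kx abj by argo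
        then show ?thesis by (meson abs_ge_self order_trans)
      next
        case 2
        then have "(b j - a j) / 4 \<le> - (Re z - (a j + b j) / 2)" using kx abj by argo
        then show ?thesis by (meson abs_ge_minus_self order_trans)
      qed
    qed
    have sumT: "(\<Sum>j\<in>K. T j) = T k + (\<Sum>j\<in>K - {k}. T j)" using K k by (simp add: sum.remove)
    have "(\<Sum>j\<in>K - {k}. T j) \<le> (\<Sum>j\<in>K - {k}. \<eta> * Pp j)"
      by (rule sum_mono) (use tailk others in auto)
    also have "\<dots> \<le> (\<Sum>j\<in>K. \<eta> * Pp j)"
      using K k Pp0 \<eta> by (intro sum_mono2) auto
    also have "\<dots> = \<eta> * (\<Sum>j\<in>K. Pp j)" by (simp add: sum_distrib_left)
    also have "\<dots> \<le> 1" using \<eta>S unfolding Pp_def by simp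
    finally have rest: "(\<Sum>j\<in>K - {k}. T j) \<le> 1" .
    have main: "cmod (F z) * exp (T k) \<le> C * exp 1"
    proof (cases "\<Psi> (b k - a k) > 0")
      case False
      then have "T k = 0" unfolding T_def by simp
      then show ?thesis using Fz by simp
    next
      case True
      have abk: "a k < b k" using ab k by auto
      have small: "cmod (F z) \<le> C * exp (- (5/16) * (b k - a k) * \<Psi> (b k - a k))"
      proof (rule local_small[OF F growth C \<sigma>_mono \<Psi>_mono cond_a abk fin[OF k(1)] zero card[OF k(1)] True])
        show "\<bar>Re z - (a k + b k) / 2\<bar> \<le> (b k - a k) / 4" using k by simp
        show "\<bar>Im z\<bar> \<le> (b k - a k) / 8" using z \<eta> k by simp
      qed
      have pqk: "(a k + b k) / 2 - (b k - a k) / 8 < (a k + b k) / 2 + (b k - a k) / 8" using abk by argo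
      have om4: "om ((a k + b k) / 2 - (b k - a k) / 8) ((a k + b k) / 2 + (b k - a k) / 8) z \<le> 4"
        using om_nonneg[OF _ pqk, of z] z \<eta> pi_less_4 by simp
      have "T k \<le> (b k - a k) * \<Psi> (b k - a k) / 16 * 4"
      proof -
        have mx: "max 0 (\<Psi> (b k - a k)) = \<Psi> (b k - a k)" using True by simp
        show ?thesis unfolding T_def mx
          using om4 True abk by (intro mult_left_mono) auto
      qed
      then have Tk: "T k \<le> (5/16) * (b k - a k) * \<Psi> (b k - a k) + 1"
        using True abk by (intro aux1) auto
      have "cmod (F z) * exp (T k) \<le> C * exp (- (5/16) * (b k - a k) * \<Psi> (b k - a k)) *
            exp ((5/16) * (b k - a k) * \<Psi> (b k - a k) + 1)"
        using small Tk C by (intro mult_mono) auto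
      also have "\<dots> = C * exp 1" by (simp add: mult.assoc exp_add[symmetric])
      finally show ?thesis .
    qed
    have "cmod (F z) * exp (\<Sum>j\<in>K. T j) = (cmod (F z) * exp (T k)) * exp (\<Sum>j\<in>K - {k}. T j)"
      unfolding sumT by (simp add: exp_add mult.assoc)
    also have "\<dots> \<le> (C * exp 1) * exp 1"
      by (rule mult_mono[OF main]) (use rest C in auto)
    finally show ?thesis unfolding T_def exp11 .
  next
    case False
    then have all: "(b k - a k) / 4 \<le> \<bar>Re z - (a k + b k) / 2\<bar>" if "k \<in> K" for k
      using that by force
    have "(\<Sum>j\<in>K. T j) \<le> (\<Sum>j\<in>K. \<eta> * Pp j)"
      by (rule sum_mono) (use tailk all in auto)
    also have "\<dots> = \<eta> * (\<Sum>j\<in>K. Pp j)" by (simp add: sum_distrib_left)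
    also have "\<dots> \<le> 1" using \<eta>S unfolding Pp_def by simp
    finally have s1: "(\<Sum>j\<in>K. T j) \<le> 1" .
    have "cmod (F z) * exp (\<Sum>j\<in>K. T j) \<le> (C * exp 1) * exp 1"
      by (rule mult_mono[OF Fz]) (use C s1 in auto)
    then show ?thesis unfolding T_def exp11 .
  qed
qed



lemma key_bound:
  fixes F :: "complex \<Rightarrow> complex" and \<Lambda> :: "real set" and \<sigma> \<Psi> :: "real \<Rightarrow> real"
    and a b :: "nat \<Rightarrow> real" and K :: "nat set"
  assumes F: "F holomorphic_on UNIV"
    and growth: "\<forall>w. cmod (F w) \<le> C * exp (\<bar>Im w\<bar> * \<sigma> \<bar>Im w\<bar>)" and C: "0 < C"
    and \<sigma>_mono: "mono_on {0<..} \<sigma>" and \<Psi>_mono: "mono_on {0<..} \<Psi>"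
    and cond_a: "\<And>x. x > 0 \<Longrightarrow> \<sigma> x \<le> 1 / (2 * exp 1) * \<Psi> (x / (2 * exp 1))"
    and K: "finite K"
    and ab: "\<And>k. k \<in> K \<Longrightarrow> a k < b k"
    and disj: "\<And>j k. j \<in> K \<Longrightarrow> k \<in> K \<Longrightarrow> j \<noteq> k \<Longrightarrow> b j \<le> a k \<or> b k \<le> a j"
    and fin: "\<And>k. k \<in> K \<Longrightarrow> finite (\<Lambda> \<inter> {a k<..<b k})"
    and card: "\<And>k. k \<in> K \<Longrightarrow> real (card (\<Lambda> \<inter> {a k<..<b k})) > (b k - a k) * \<Psi> (b k - a k)"
    and zero: "\<forall>t\<in>\<Lambda>. F (of_real t) = 0"
    and a1: "0 < a1" and a_ge: "\<And>k. k \<in> K \<Longrightarrow> a1 \<le> a k"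
    and Rb: "\<And>k. k \<in> K \<Longrightarrow> 2 * b k \<le> R"
    and y0: "0 < y0" "y0 \<le> a1 / 2" "y0 < R"
    and \<sigma>R: "0 \<le> \<sigma> R"
  shows "cmod (F (\<i> * of_real y0)) \<le> C * exp 2 *
     exp (y0 * (\<sigma> R - (\<Sum>k\<in>K. max 0 (\<Psi> (b k - a k)) * (b k - a k)\<^sup>2 / (256 * (b k)\<^sup>2))))"
proof -
  define p where "p k = (a k + b k) / 2 - (b k - a k) / 8" for k
  define q where "q k = (a k + b k) / 2 + (b k - a k) / 8" for k
  define ps where "ps k = R\<^sup>2 / q k" for k
  define qs where "qs k = R\<^sup>2 / p k" for k
  define B where "B k = (b k - a k) * max 0 (\<Psi> (b k - a k)) / 16" for k
  have R0: "0 < R" using y0 by simp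
  have p0: "0 < p k" "a k < p k" if "k \<in> K" for k
    using ab[OF that] a_ge[OF that] a1 unfolding p_def by argo+
  have pq: "p k < q k" "q k < b k" if "k \<in> K" for k
    using ab[OF that] unfolding p_def q_def by argo+
  have q0: "0 < q k" if "k \<in> K" for k using p0[OF that] pq[OF that] by simp
  have pqs: "ps k < qs k" if "k \<in> K" for k
    unfolding ps_def qs_def using p0[OF that] pq[OF that] R0 by (simp add: divide_strict_left_mono)
  have B0: "0 \<le> B k" if "k \<in> K" for k unfolding B_def using ab[OF that] by simp
  define Lm where "Lm = (if K = {} then 1 else Min ((\<lambda>k. (b k - a k) / 8) ` K))"
  have Lm0: "0 < Lm" unfolding Lm_def using K ab by (auto simp: Min_gr_iff)
  have Lmk: "Lm \<le> (b k - a k) / 8" if "k \<in> K" for k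
  proof -
    have "Lm = Min ((\<lambda>k. (b k - a k) / 8) ` K)" unfolding Lm_def using that by auto
    also have "\<dots> \<le> (b k - a k) / 8" by (rule Min_le) (use K that in auto)
    finally show ?thesis .
  qed
  define S\<Psi> where "S\<Psi> = (\<Sum>k\<in>K. max 0 (\<Psi> (b k - a k)))"
  have S\<Psi>0: "0 \<le> S\<Psi>" unfolding S\<Psi>_def by (rule sum_nonneg) simp
  define D where "D = 1 + S\<Psi> + max 0 (\<sigma> 1)"
  have D1: "1 \<le> D" unfolding D_def using S\<Psi>0 by simp
  define \<eta> where "\<eta> = min (min (y0 / 2) 1) (min Lm (1 / D))"
  have \<eta>0: "0 < \<eta>" unfolding \<eta>_def using y0 Lm0 D1 by simp
  have \<eta>1: "\<eta> \<le> 1" "\<eta> < y0" unfolding \<eta>_def using y0 by auto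
  have \<eta>l: "\<eta> \<le> (b k - a k) / 8" if "k \<in> K" for k
    using Lmk[OF that] unfolding \<eta>_def by linarith
  have \<eta>D: "\<eta> * D \<le> 1"
  proof -
    have "\<eta> \<le> 1 / D" unfolding \<eta>_def by linarith
    then show ?thesis using D1 by (simp add: field_simps)
  qed
  have \<eta>S: "\<eta> * S\<Psi> \<le> 1" and \<eta>\<sigma>: "\<eta> * max 0 (\<sigma> 1) \<le> 1"
  proof -
    have "\<eta> * D = \<eta> + \<eta> * S\<Psi> + \<eta> * max 0 (\<sigma> 1)" unfolding D_def by (simp add: algebra_simps)
    moreover have "0 \<le> \<eta> * S\<Psi>" "0 \<le> \<eta> * max 0 (\<sigma> 1)" using \<eta>0 S\<Psi>0 by auto
    ultimately show "\<eta> * S\<Psi> \<le> 1" "\<eta> * max 0 (\<sigma> 1) \<le> 1" using \<eta>D \<eta>0 by linarith+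
  qed
  define c0 where "c0 = ln C + 2"
  define H where "H z = of_real c0 - \<i> * of_real (\<sigma> R) * z +
     \<i> * (\<Sum>k\<in>K. of_real (B k) * (Ln ((z - of_real (q k)) / (z - of_real (p k))) -
                                   Ln ((z - of_real (qs k)) / (z - of_real (ps k)))))" for z
  have ReH: "Re (H z) = c0 + \<sigma> R * Im z - (\<Sum>k\<in>K. B k * (om (p k) (q k) z - om (ps k) (qs k) z))" for z
    unfolding H_def om_def by (simp add: Im_sum algebra_simps)
  define U where "U = {z. 0 < Im z}"
  have openU: "open U" unfolding U_def by (rule open_halfspace_Im_gt)
  have holH: "H holomorphic_on U" unfolding H_def
  proof (intro holomorphic_intros)
    fix k z assume k: "k \<in> K" and z: "z \<in> U"
    then have "0 < Im z" unfolding U_def by simp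
    then show "(z - of_real (q k)) / (z - of_real (p k)) \<notin> \<real>\<^sub>\<le>\<^sub>0"
      "(z - of_real (qs k)) / (z - of_real (ps k)) \<notin> \<real>\<^sub>\<le>\<^sub>0"
      "z - of_real (p k) \<noteq> 0" "z - of_real (ps k) \<noteq> 0"
      using ratio_not_nonpos pq[OF k] pqs[OF k] by auto
  qed
  define G where "G z = F z * exp (- H z)" for z
  have holG: "G holomorphic_on U" unfolding G_def
    using holH holomorphic_on_subset[OF F] by (intro holomorphic_intros) auto
  have normG: "cmod (G z) = cmod (F z) * exp (- Re (H z))" for z
    unfolding G_def by (simp add: norm_mult norm_exp_eq_Re)
  have Gle: "cmod (G z) \<le> 1" if "cmod (F z) \<le> exp (Re (H z))" for z
  proof -
    have "cmod (F z) * exp (- Re (H z)) \<le> exp (Re (H z)) * exp (- Re (H z))"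
      using that by (intro mult_right_mono) auto
    also have "\<dots> = 1" by (simp add: exp_minus)
    finally show ?thesis unfolding normG .
  qed
  define S where "S = ball 0 R \<inter> {z. \<eta> < Im z}"
  have openS: "open S" unfolding S_def by (intro open_Int open_ball open_halfspace_Im_gt)
  have clS: "closure S \<subseteq> cball 0 R \<inter> {z. \<eta> \<le> Im z}"
    unfolding S_def by (intro closure_minimal) (auto intro: closed_Int closed_halfspace_Im_ge)
  have clSU: "closure S \<subseteq> U" using clS \<eta>0 unfolding U_def by auto
  have yS: "\<i> * of_real y0 \<in> S" unfolding S_def using y0 \<eta>1 by (simp add: norm_mult)
  have bound: "cmod (G z) \<le> 1" if fr: "z \<in> frontier S" for z
  proof (rule Gle)
    have zc: "cmod z \<le> R" "\<eta> \<le> Im z" using fr clS unfolding frontier_def by auto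
    have "z \<notin> S" using fr interior_open[OF openS] unfolding frontier_def by auto
    then have zn: "\<not> (cmod z < R \<and> \<eta> < Im z)" unfolding S_def by auto
    have imz: "0 < Im z" using zc \<eta>0 by simp
    show "cmod (F z) \<le> exp (Re (H z))"
    proof (cases "cmod z = R")
      case True
      have "(\<Sum>k\<in>K. B k * (om (p k) (q k) z - om (ps k) (qs k) z)) = 0"
      proof (rule sum.neutral, intro ballI)
        fix k assume k: "k \<in> K"
        have "om (ps k) (qs k) z = om (p k) (q k) z"
          unfolding ps_def qs_def by (rule om_reflect[OF imz p0(1)[OF k] pq(1)[OF k] True])
        then show "B k * (om (p k) (q k) z - om (ps k) (qs k) z) = 0" by simp
      qed
      then have ReHz: "Re (H z) = c0 + \<sigma> R * Im z" unfolding ReH by simp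
      have "Im z \<le> R" using True abs_Im_le_cmod[of z] imz by simp
      then have "\<sigma> (Im z) \<le> \<sigma> R" using imz by (intro mono_onD[OF \<sigma>_mono]) auto
      then have "Im z * \<sigma> (Im z) \<le> Im z * \<sigma> R" using imz by (intro mult_left_mono) auto
      then have h: "Im z * \<sigma> (Im z) \<le> \<sigma> R * Im z" by (simp only: mult.commute[of "\<sigma> R"])
      have abs: "\<bar>Im z\<bar> = Im z" using imz by simp
      have "\<bar>Im z\<bar> * \<sigma> \<bar>Im z\<bar> \<le> c0 + \<sigma> R * Im z - ln C"
        unfolding abs c0_def using h by linarith
      then have "C * exp (\<bar>Im z\<bar> * \<sigma> \<bar>Im z\<bar>) \<le> C * exp (c0 + \<sigma> R * Im z - ln C)"
        using C by simp
      also have "\<dots> = exp (c0 + \<sigma> R * Im z)" using C by (simp add: exp_diff)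
      finally show ?thesis unfolding ReHz using growth order_trans by blast
    next
      case False
      then have zeta: "Im z = \<eta>" using zc zn by auto
      have seg: "cmod (F z) * exp (\<Sum>k\<in>K. B k * om (p k) (q k) z) \<le> C * exp 2"
        unfolding B_def p_def q_def
        by (rule seg_bound[OF F growth C \<sigma>_mono \<Psi>_mono cond_a K ab disj fin card zero \<eta>0 \<eta>1(1) \<eta>l _ \<eta>\<sigma> zeta])
           (use \<eta>S S\<Psi>_def in auto)
      have "0 \<le> (\<Sum>k\<in>K. B k * om (ps k) (qs k) z)"
        using B0 om_nonneg[OF imz] pqs by (intro sum_nonneg mult_nonneg_nonneg) auto
      moreover have "0 \<le> \<sigma> R * Im z" using \<sigma>R imz by simp
      ultimately have "c0 - (\<Sum>k\<in>K. B k * om (p k) (q k) z) \<le> Re (H z)"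
        unfolding ReH by (simp add: sum_subtractf right_diff_distrib)
      then have "exp (c0 - (\<Sum>k\<in>K. B k * om (p k) (q k) z)) \<le> exp (Re (H z))" by simp
      moreover have "cmod (F z) \<le> exp (c0 - (\<Sum>k\<in>K. B k * om (p k) (q k) z))"
      proof -
        have "exp (c0 - (\<Sum>k\<in>K. B k * om (p k) (q k) z)) =
              C * exp 2 / exp (\<Sum>k\<in>K. B k * om (p k) (q k) z)"
          unfolding c0_def using C by (simp add: exp_diff exp_add)
        then show ?thesis using seg by (simp add: pos_le_divide_eq)
      qed
      ultimately show ?thesis by linarith
    qed
  qed
  have Gy: "cmod (G (\<i> * of_real y0)) \<le> 1"
  proof (rule maximum_modulus_frontier[OF _ _ _ bound yS])
    show "G holomorphic_on interior S"
      using holG clSU closure_subset interior_subset by (meson holomorphic_on_subset subset_trans)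
    show "continuous_on (closure S) G"
      using holomorphic_on_imp_continuous_on[OF holG] clSU continuous_on_subset by blast
    show "bounded S" unfolding S_def by (simp add: bounded_Int)
  qed
  have Fy: "cmod (F (\<i> * of_real y0)) \<le> exp (Re (H (\<i> * of_real y0)))"
  proof -
    have "cmod (F (\<i> * of_real y0)) * exp (- Re (H (\<i> * of_real y0))) \<le> 1" using Gy normG by simp
    then show ?thesis by (simp add: exp_minus field_simps)
  qed
  have gk: "B k * ((b k - a k) * y0 / (16 * (b k)\<^sup>2)) \<le>
            B k * (om (p k) (q k) (\<i> * of_real y0) - om (ps k) (qs k) (\<i> * of_real y0))" if k: "k \<in> K" for k
  proof (rule mult_left_mono[OF _ B0[OF k]])
    have g: "(q k - p k) * y0 / (4 * (q k)\<^sup>2) \<le> om (p k) (q k) (\<i> * of_real y0) - om (ps k) (qs k) (\<i> * of_real y0)"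
      unfolding ps_def qs_def
    proof (rule gain)
      show "0 < p k" "p k < q k" using p0[OF k] pq[OF k] by auto
      show "0 < y0" using y0 by simp
      show "y0 \<le> p k / 2" using y0 a_ge[OF k] p0[OF k] by simp
      show "2 * q k \<le> R" using Rb[OF k] pq[OF k] by simp
    qed
    have qp: "q k - p k = (b k - a k) / 4" unfolding p_def q_def by simp
    have "(q k)\<^sup>2 \<le> (b k)\<^sup>2" using q0[OF k] pq[OF k] by (intro power_mono) auto
    then have "(b k - a k) * y0 / (16 * (b k)\<^sup>2) \<le> (b k - a k) * y0 / (16 * (q k)\<^sup>2)"
      using ab[OF k] y0 q0[OF k] pq[OF k] by (intro divide_left_mono) auto
    also have "\<dots> = (q k - p k) * y0 / (4 * (q k)\<^sup>2)" unfolding qp by simp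
    finally show "(b k - a k) * y0 / (16 * (b k)\<^sup>2) \<le>
        om (p k) (q k) (\<i> * of_real y0) - om (ps k) (qs k) (\<i> * of_real y0)" using g by linarith
  qed
  have "y0 * (\<Sum>k\<in>K. max 0 (\<Psi> (b k - a k)) * (b k - a k)\<^sup>2 / (256 * (b k)\<^sup>2)) =
        (\<Sum>k\<in>K. B k * ((b k - a k) * y0 / (16 * (b k)\<^sup>2)))"
    unfolding sum_distrib_left B_def by (intro sum.cong) (auto simp: power2_eq_square field_simps)
  also have "\<dots> \<le> (\<Sum>k\<in>K. B k * (om (p k) (q k) (\<i> * of_real y0) - om (ps k) (qs k) (\<i> * of_real y0)))"
    by (rule sum_mono) (rule gk)
  finally have sumg: "y0 * (\<Sum>k\<in>K. max 0 (\<Psi> (b k - a k)) * (b k - a k)\<^sup>2 / (256 * (b k)\<^sup>2)) \<le>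
     (\<Sum>k\<in>K. B k * (om (p k) (q k) (\<i> * of_real y0) - om (ps k) (qs k) (\<i> * of_real y0)))" .
  have "Re (H (\<i> * of_real y0)) \<le> c0 + y0 * (\<sigma> R - (\<Sum>k\<in>K. max 0 (\<Psi> (b k - a k)) * (b k - a k)\<^sup>2 / (256 * (b k)\<^sup>2)))"
    unfolding ReH using sumg by (simp add: right_diff_distrib mult.commute)
  then have "exp (Re (H (\<i> * of_real y0))) \<le> exp (c0 + y0 * (\<sigma> R - (\<Sum>k\<in>K. max 0 (\<Psi> (b k - a k)) * (b k - a k)\<^sup>2 / (256 * (b k)\<^sup>2))))"
    by simp
  also have "\<dots> = C * exp 2 * exp (y0 * (\<sigma> R - (\<Sum>k\<in>K. max 0 (\<Psi> (b k - a k)) * (b k - a k)\<^sup>2 / (256 * (b k)\<^sup>2))))"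
    unfolding c0_def using C by (simp add: exp_add)
  finally show ?thesis using Fy by linarith
qed



theorem theorem3p3:
  fixes \<Lambda> :: "real set" and a b :: "nat \<Rightarrow> real" and \<Psi> \<sigma> :: "real \<Rightarrow> real"
  assumes \<Lambda>_pos: "\<Lambda> \<subseteq> {0<..}"
    and a1_pos: "0 < a 1"
    and ab: "\<And>k. k \<ge> 1 \<Longrightarrow> a k < b k"
    and ba: "\<And>k. k \<ge> 1 \<Longrightarrow> b k < a (Suc k)"
    and a_lim: "filterlim a at_top sequentially"
    and \<Psi>_mono: "mono_on {0<..} \<Psi>"
    and \<Psi>_lim: "filterlim \<Psi> at_top at_top"
    and subst: "substantial \<Lambda> a b \<Psi>"
    and \<sigma>_mono: "mono_on {0<..} \<sigma>"
    and \<sigma>_lim: "filterlim \<sigma> at_top at_top"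
    and cond_a: "\<And>x. x > 0 \<Longrightarrow> \<sigma> x \<le> 1 / (2 * exp 1) * \<Psi> (x / (2 * exp 1))"
    and cond_b: "\<exists>n :: nat \<Rightarrow> nat. filterlim n at_top sequentially \<and>
        filterlim (\<lambda>j. (1 / \<sigma> (2 * b (n j))) *
           (\<Sum>k=1..n j. \<Psi> (b k - a k) * ((b k - a k) / b k)^2)) at_top sequentially"
  shows "uniqueness_set \<Lambda> \<sigma>"
  unfolding uniqueness_set_def
proof (intro ballI impI allI)
  fix F z1 assume FB: "F \<in> bernstein_class \<sigma>" and zero: "\<forall>t\<in>\<Lambda>. F (complex_of_real t) = 0"
  show "F z1 = 0"
  proof (rule ccontr)
    assume Fz1: "F z1 \<noteq> 0"
    have F: "F holomorphic_on UNIV" using FB unfolding bernstein_class_def by auto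
    obtain C where C: "0 < C" and growth: "\<forall>w. cmod (F w) \<le> C * exp (\<bar>Im w\<bar> * \<sigma> \<bar>Im w\<bar>)"
      using FB unfolding bernstein_class_def by auto
    have nz: "False" if "infinite T" "T \<subseteq> cball 0 \<rho>" "\<forall>t\<in>T. F t = 0" for T \<rho>
      using entire_zero_infinite[OF F that, of z1] Fz1 by simp
    have astep: "a m \<le> a (Suc m)" if "1 \<le> m" for m using ab[OF that] ba[OF that] by simp
    have amono: "a j \<le> a k" if "1 \<le> j" "j \<le> k" for j k
      using that(2,1)
    proof (induction k rule: dec_induct)
      case base then show ?case by simp
    next
      case (step m) then show ?case using astep[of m] by simp
    qed
    have bja: "b j < a k" if "1 \<le> j" "j < k" for j k
      using ba[OF that(1)] amono[of "Suc j" k] that by simp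
    have age: "a 1 \<le> a k" if "1 \<le> k" for k using amono[OF _ that] by simp
    have fin: "finite (\<Lambda> \<inter> {a k<..<b k})" if k: "1 \<le> k" for k
    proof (rule ccontr)
      assume inf: "infinite (\<Lambda> \<inter> {a k<..<b k})"
      have "infinite (complex_of_real ` (\<Lambda> \<inter> {a k<..<b k}))"
        using inf finite_imageD inj_on_def by (metis of_real_eq_iff)
      moreover have "complex_of_real ` (\<Lambda> \<inter> {a k<..<b k}) \<subseteq> cball 0 (b k)"
      proof
        fix w assume "w \<in> complex_of_real ` (\<Lambda> \<inter> {a k<..<b k})"
        then obtain t where t: "t \<in> {a k<..<b k}" "w = of_real t" by auto
        have "0 < a k" using age[OF k] a1_pos by simp
        then show "w \<in> cball 0 (b k)" using t by simp
      qed
      moreover have "\<forall>t\<in>complex_of_real ` (\<Lambda> \<inter> {a k<..<b k}). F t = 0" using zero by auto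
      ultimately show False by (rule nz)
    qed
    have card: "real (card (\<Lambda> \<inter> {a k<..<b k})) > (b k - a k) * \<Psi> (b k - a k)" if k: "1 \<le> k" for k
    proof -
      have l: "0 < b k - a k" using ab[OF k] by simp
      have "real (card (\<Lambda> \<inter> {a k<..<b k})) / (b k - a k) > \<Psi> (b k - a k)"
        using subst fin[OF k] k unfolding substantial_def by auto
      then show ?thesis using l by (simp add: pos_less_divide_eq mult.commute)
    qed
    obtain y0 where y0: "0 < y0" "y0 \<le> a 1 / 2" and Fy0: "F (\<i> * of_real y0) \<noteq> 0"
    proof -
      have "\<exists>y0. 0 < y0 \<and> y0 \<le> a 1 / 2 \<and> F (\<i> * of_real y0) \<noteq> 0"
      proof (rule ccontr)
        assume "\<not> ?thesis"
        then have all: "\<forall>t\<in>(\<lambda>y. \<i> * of_real y) ` {0<..a 1 / 2}. F t = 0" by auto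
        have "infinite {0<..a 1 / 2}" using a1_pos by (intro infinite_Ioc) simp
        then have "infinite ((\<lambda>y. \<i> * complex_of_real y) ` {0<..a 1 / 2})"
          using finite_imageD inj_on_def by (metis (no_types, lifting) mult_cancel_left of_real_eq_iff complex_i_not_zero)
        moreover have "(\<lambda>y. \<i> * complex_of_real y) ` {0<..a 1 / 2} \<subseteq> cball 0 (a 1 / 2)"
          by (auto simp: norm_mult)
        ultimately show False using all by (intro nz)
      qed
      then show ?thesis using that by blast
    qed
    define c where "c = cmod (F (\<i> * of_real y0))"
    have c0: "0 < c" using Fy0 c_def by simp
    define M where "M = max 1 ((ln (C * exp 2) - ln c + 1) / y0)"
    obtain nn :: "nat \<Rightarrow> nat" where nn: "filterlim nn at_top sequentially"
      and rat: "filterlim (\<lambda>j. (1 / \<sigma> (2 * b (nn j))) *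
           (\<Sum>k=1..nn j. \<Psi> (b k - a k) * ((b k - a k) / b k)^2)) at_top sequentially"
      using cond_b by blast
    obtain X where X: "\<And>x. x \<ge> X \<Longrightarrow> \<sigma> x \<ge> M"
      using \<sigma>_lim unfolding filterlim_at_top eventually_at_top_linorder by blast
    obtain N where N: "\<And>m. m \<ge> N \<Longrightarrow> a m \<ge> X"
      using a_lim unfolding filterlim_at_top eventually_sequentially by blast
    have ev1: "eventually (\<lambda>j. nn j \<ge> max N 1) sequentially"
      using nn unfolding filterlim_at_top by blast
    have ev2: "eventually (\<lambda>j. (1 / \<sigma> (2 * b (nn j))) *
           (\<Sum>k=1..nn j. \<Psi> (b k - a k) * ((b k - a k) / b k)^2) \<ge> 512) sequentially"
      using rat unfolding filterlim_at_top by blast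
    obtain j where j1: "nn j \<ge> max N 1" and j2: "(1 / \<sigma> (2 * b (nn j))) *
           (\<Sum>k=1..nn j. \<Psi> (b k - a k) * ((b k - a k) / b k)^2) \<ge> 512"
      using eventually_conj[OF ev1 ev2] unfolding eventually_sequentially by blast
    define n where "n = nn j"
    have n1: "1 \<le> n" using j1 n_def by simp
    have bn0: "0 < b n" using ab[OF n1] age[OF n1] a1_pos by simp
    have "X \<le> a n" using N j1 n_def by simp
    then have "X \<le> 2 * b n" using ab[OF n1] bn0 by simp
    then have \<sigma>M: "M \<le> \<sigma> (2 * b n)" using X by simp
    have M1: "1 \<le> M" unfolding M_def by simp
    have \<sigma>0: "0 < \<sigma> (2 * b n)" using \<sigma>M M1 by simp
    define T where "T = (\<Sum>k=1..n. \<Psi> (b k - a k) * ((b k - a k) / b k)^2)"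
    have T: "512 * \<sigma> (2 * b n) \<le> T"
      using j2 \<sigma>0 unfolding T_def n_def by (simp add: field_simps)
    have ble: "b k \<le> b n" if "k \<in> {1..n}" for k
    proof (cases "k = n")
      case False
      then have "b k < a n" using bja[of k n] that by simp
      then show ?thesis using ab[OF n1] by simp
    qed simp
    have key: "c \<le> C * exp 2 *
       exp (y0 * (\<sigma> (2 * b n) - (\<Sum>k\<in>{1..n}. max 0 (\<Psi> (b k - a k)) * (b k - a k)\<^sup>2 / (256 * (b k)\<^sup>2))))"
      unfolding c_def
    proof (rule key_bound[OF F growth C \<sigma>_mono \<Psi>_mono cond_a])
      show "finite {1..n}" by simp
      show "\<And>k. k \<in> {1..n} \<Longrightarrow> a k < b k" using ab by simp
      show "\<And>j k. j \<in> {1..n} \<Longrightarrow> k \<in> {1..n} \<Longrightarrow> j \<noteq> k \<Longrightarrow> b j \<le> a k \<or> b k \<le> a j"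
      proof -
        fix j k assume "j \<in> {1..n}" "k \<in> {1..n}" "j \<noteq> k"
        then show "b j \<le> a k \<or> b k \<le> a j"
          using bja[of j k] bja[of k j] by (cases "j < k") auto
      qed
      show "\<And>k. k \<in> {1..n} \<Longrightarrow> finite (\<Lambda> \<inter> {a k<..<b k})" using fin by simp
      show "\<And>k. k \<in> {1..n} \<Longrightarrow> real (card (\<Lambda> \<inter> {a k<..<b k})) > (b k - a k) * \<Psi> (b k - a k)"
        using card by simp
      show "\<forall>t\<in>\<Lambda>. F (of_real t) = 0" using zero by simp
      show "0 < a 1" by (rule a1_pos)
      show "\<And>k. k \<in> {1..n} \<Longrightarrow> a 1 \<le> a k" using age by simp
      show "\<And>k. k \<in> {1..n} \<Longrightarrow> 2 * b k \<le> 2 * b n" using ble by simp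
      show "0 < y0" "y0 \<le> a 1 / 2" by (rule y0(1), rule y0(2))
      show "y0 < 2 * b n" using y0 age[OF n1] ab[OF n1] a1_pos by simp
      show "0 \<le> \<sigma> (2 * b n)" using \<sigma>0 by simp
    qed
    have "T / 256 \<le> (\<Sum>k\<in>{1..n}. max 0 (\<Psi> (b k - a k)) * (b k - a k)\<^sup>2 / (256 * (b k)\<^sup>2))"
      unfolding T_def sum_divide_distrib
    proof (rule sum_mono)
      fix k assume "k \<in> {1..n}"
      have "\<Psi> (b k - a k) * ((b k - a k) / b k)\<^sup>2 \<le> max 0 (\<Psi> (b k - a k)) * ((b k - a k) / b k)\<^sup>2"
        by (intro mult_right_mono) auto
      then show "\<Psi> (b k - a k) * ((b k - a k) / b k)\<^sup>2 / 256 \<le>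
          max 0 (\<Psi> (b k - a k)) * (b k - a k)\<^sup>2 / (256 * (b k)\<^sup>2)"
        by (simp add: power_divide)
    qed
    then have "\<sigma> (2 * b n) - (\<Sum>k\<in>{1..n}. max 0 (\<Psi> (b k - a k)) * (b k - a k)\<^sup>2 / (256 * (b k)\<^sup>2))
        \<le> - M" using T \<sigma>M by linarith
    then have "y0 * (\<sigma> (2 * b n) - (\<Sum>k\<in>{1..n}. max 0 (\<Psi> (b k - a k)) * (b k - a k)\<^sup>2 / (256 * (b k)\<^sup>2)))
        \<le> y0 * (- M)" using y0 by (intro mult_left_mono) auto
    also have "\<dots> \<le> - (ln (C * exp 2) - ln c + 1)"
    proof -
      have "(ln (C * exp 2) - ln c + 1) / y0 \<le> M" unfolding M_def by simp
      then have "ln (C * exp 2) - ln c + 1 \<le> y0 * M" using y0 by (simp add: pos_divide_le_eq mult.commute)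
      then show ?thesis by simp
    qed
    finally have E: "y0 * (\<sigma> (2 * b n) - (\<Sum>k\<in>{1..n}. max 0 (\<Psi> (b k - a k)) * (b k - a k)\<^sup>2 / (256 * (b k)\<^sup>2)))
        \<le> - (ln (C * exp 2) - ln c + 1)" .
    have "C * exp 2 * exp (y0 * (\<sigma> (2 * b n) - (\<Sum>k\<in>{1..n}. max 0 (\<Psi> (b k - a k)) * (b k - a k)\<^sup>2 / (256 * (b k)\<^sup>2))))
       \<le> C * exp 2 * exp (- (ln (C * exp 2) - ln c + 1))"
      by (rule mult_left_mono) (use E C in auto)
    then have "c \<le> C * exp 2 * exp (- (ln (C * exp 2) - ln c + 1))"
      using key by linarith
    also have "\<dots> = c * exp (-1)"
      using C c0 by (simp add: exp_diff exp_minus exp_add field_simps)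
    also have "\<dots> < c" using c0 by simp
    finally show False by simp
  qed
qed


end
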